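(* Let $\mathcal{A}=\{1,\dots,L\}$ and let $Q_T$ be a pmf on $\mathcal{A}$ with $Q_T(a)>0$ for all $a$ and $Q_T\neq U_L$. Let $I>\log_2L$ and, for each $n$, let $\mathcal{S}_n=\{a^n\in\mathcal{A}^n: H(\pi(a^n),Q_T)\le I\}$ and $P_{A^n}=U_{\mathcal{S}_n}$ (the uniform pmf on $\mathcal{S}_n$). Then $D(P_{A^n}\|Q_T^n)$ scales linearly with $n$: there exist constants $0<c_1\le c_2<\infty$ such that $c_1n\le D(P_{A^n}\|Q_T^n)\le c_2n$ for all sufficiently large $n$.
   Context: $U_L$ is the uniform pmf on $\mathcal{A}$. $H(P,Q)=-\sum_{a:P(a)>0}P(a)\log_2Q(a)$ is cross entropy; $D(\cdot\|\cdot)$ is informational divergence in bits; $Q_T^n$ is the iid pmf on $\mathcal{A}^n$. The empirical pmf of $a^n$ is $\pi(a^n)=\frac1n[n_1,\dots,n_L]$, with $n_i$ the number of occurrences of letter $i$. *)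

theory Defs
  imports Complex_Main
begin

definition is_pmf :: "'a set \<Rightarrow> ('a \<Rightarrow> real) \<Rightarrow> bool" where
  "is_pmf A P \<longleftrightarrow> (\<forall>a\<in>A. 0 \<le> P a) \<and> (\<Sum>a\<in>A. P a) = 1"

definition uniform_on :: "'a set \<Rightarrow> 'a \<Rightarrow> real" where
  "uniform_on S x = (if x \<in> S then 1 / real (card S) else 0)"

definition seqs :: "nat \<Rightarrow> nat \<Rightarrow> nat list set" where
  "seqs L n = {xs. length xs = n \<and> set xs \<subseteq> {1..L}}"

definition emp_pmf :: "nat list \<Rightarrow> nat \<Rightarrow> real" where
  "emp_pmf xs a = real (count_list xs a) / real (length xs)"

definition cross_entropy :: "'a set \<Rightarrow> ('a \<Rightarrow> real) \<Rightarrow> ('a \<Rightarrow> real) \<Rightarrow> real" where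
  "cross_entropy A P Q = - (\<Sum>a\<in>{a\<in>A. 0 < P a}. P a * log 2 (Q a))"

definition divergence :: "'a set \<Rightarrow> ('a \<Rightarrow> real) \<Rightarrow> ('a \<Rightarrow> real) \<Rightarrow> real" where
  "divergence X P Q = (\<Sum>x\<in>{x\<in>X. 0 < P x}. P x * log 2 (P x / Q x))"

definition iid_pmf :: "(nat \<Rightarrow> real) \<Rightarrow> nat list \<Rightarrow> real" where
  "iid_pmf Q xs = prod_list (map Q xs)"

definition typical_set :: "nat \<Rightarrow> (nat \<Rightarrow> real) \<Rightarrow> real \<Rightarrow> nat \<Rightarrow> nat list set" where
  "typical_set L Q I n = {xs \<in> seqs L n. cross_entropy {1..L} (emp_pmf xs) Q \<le> I}"

end

theory Submission
  imports Defs
begin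

lemma finite_seqs: "finite (seqs L n)"
proof -
  have "seqs L n = {xs. set xs \<subseteq> {1..L} \<and> length xs = n}" unfolding seqs_def by auto
  then show ?thesis using finite_lists_length_eq[of "{1..L}" n] by simp
qed

lemma seqs_Suc: "seqs L (Suc n) = (\<lambda>(a,xs). a#xs) ` ({1..L} \<times> seqs L n)"
proof
  show "seqs L (Suc n) \<subseteq> (\<lambda>(a,xs). a#xs) ` ({1..L} \<times> seqs L n)"
  proof
    fix x assume "x \<in> seqs L (Suc n)"
    then obtain a xs where "x = a#xs" "a \<in> {1..L}" "xs \<in> seqs L n"
      unfolding seqs_def by (cases x) auto
    then show "x \<in> (\<lambda>(a,xs). a#xs) ` ({1..L} \<times> seqs L n)" by force
  qed
qed (auto simp: seqs_def)

lemma sum_seqs_Suc: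
  "(\<Sum>x\<in>seqs L (Suc n). F x) = (\<Sum>a\<in>{1..L}. \<Sum>xs\<in>seqs L n. F (a#xs))"
proof -
  have inj: "inj_on (\<lambda>(a,xs). a#xs) ({1..L} \<times> seqs L n)" by (auto simp: inj_on_def)
  have "(\<Sum>x\<in>seqs L (Suc n). F x) = (\<Sum>p\<in>{1..L} \<times> seqs L n. F ((\<lambda>(a,xs). a#xs) p))"
    unfolding seqs_Suc by (rule sum.reindex[OF inj, unfolded comp_def])
  also have "\<dots> = (\<Sum>a\<in>{1..L}. \<Sum>xs\<in>seqs L n. F (a#xs))"
    by (simp add: sum.cartesian_product case_prod_unfold)
  finally show ?thesis .
qed

lemma seqs_0: "seqs L 0 = {[]}" by (auto simp: seqs_def)

lemma sum_prod_seqs: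
  "(\<Sum>x\<in>seqs L n. prod_list (map f x)) = (\<Sum>a\<in>{1..L}. (f a::real)) ^ n"
proof (induction n)
  case 0 then show ?case by (simp add: seqs_0)
next
  case (Suc n)
  have "(\<Sum>x\<in>seqs L (Suc n). prod_list (map f x)) = (\<Sum>a\<in>{1..L}. f a * (\<Sum>xs\<in>seqs L n. prod_list (map f xs)))"
    by (simp add: sum_seqs_Suc sum_distrib_left)
  also have "\<dots> = (\<Sum>a\<in>{1..L}. f a) ^ Suc n" using Suc by (simp add: sum_distrib_right[symmetric])
  finally show ?case .
qed

lemma moment1:
  assumes "(\<Sum>a\<in>{1..L}. R a) = (1::real)" "(\<Sum>a\<in>{1..L}. R a * g a) = 0"
  shows "(\<Sum>x\<in>seqs L n. prod_list (map R x) * sum_list (map g x)) = 0"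
proof (induction n)
  case 0 then show ?case by (simp add: seqs_0)
next
  case (Suc n)
  have "(\<Sum>x\<in>seqs L (Suc n). prod_list (map R x) * sum_list (map g x))
     = (\<Sum>a\<in>{1..L}. R a * g a * (\<Sum>xs\<in>seqs L n. prod_list (map R xs))
          + R a * (\<Sum>xs\<in>seqs L n. prod_list (map R xs) * sum_list (map g xs)))"
    by (simp add: sum_seqs_Suc sum_distrib_left sum.distrib algebra_simps)
  also have "\<dots> = 0" using Suc assms by (simp add: sum_prod_seqs sum_distrib_right[symmetric])
  finally show ?case .
qed

lemma moment2:
  assumes "(\<Sum>a\<in>{1..L}. R a) = (1::real)" "(\<Sum>a\<in>{1..L}. R a * g a) = 0"
  shows "(\<Sum>x\<in>seqs L n. prod_list (map R x) * (sum_list (map g x))^2) = real n * (\<Sum>a\<in>{1..L}. R a * (g a)^2)"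
proof (induction n)
  case 0 then show ?case by (simp add: seqs_0)
next
  case (Suc n)
  have "(\<Sum>x\<in>seqs L (Suc n). prod_list (map R x) * (sum_list (map g x))^2)
     = (\<Sum>a\<in>{1..L}. R a * (g a)^2 * (\<Sum>xs\<in>seqs L n. prod_list (map R xs))
          + 2 * R a * g a * (\<Sum>xs\<in>seqs L n. prod_list (map R xs) * sum_list (map g xs))
          + R a * (\<Sum>xs\<in>seqs L n. prod_list (map R xs) * (sum_list (map g xs))^2))"
    by (simp add: sum_seqs_Suc sum_distrib_left sum.distrib algebra_simps power2_eq_square)
  also have "\<dots> = real (Suc n) * (\<Sum>a\<in>{1..L}. R a * (g a)^2)"
  proof -
    have m1: "(\<Sum>xs\<in>seqs L n. prod_list (map R xs) * sum_list (map g xs)) = 0"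
      using moment1[OF assms] .
    have "(\<Sum>a\<in>{1..L}. R a * (g a)^2 * (\<Sum>xs\<in>seqs L n. prod_list (map R xs))
          + 2 * R a * g a * (\<Sum>xs\<in>seqs L n. prod_list (map R xs) * sum_list (map g xs))
          + R a * (\<Sum>xs\<in>seqs L n. prod_list (map R xs) * (sum_list (map g xs))^2))
        = (\<Sum>a\<in>{1..L}. R a * (g a)^2 + R a * (real n * (\<Sum>a\<in>{1..L}. R a * (g a)^2)))"
      using Suc assms(1) by (simp add: sum_prod_seqs m1)
    also have "\<dots> = (\<Sum>a\<in>{1..L}. R a * (g a)^2) + (\<Sum>a\<in>{1..L}. R a) * (real n * (\<Sum>a\<in>{1..L}. R a * (g a)^2))"
      by (simp add: sum.distrib sum_distrib_right)
    finally show ?thesis using assms(1) by (simp add: algebra_simps)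
  qed
  finally show ?case .
qed


lemma powr2_split: "(2::real) powr y = 2 powr m * exp ((y - m) * ln 2)"
  by (simp add: powr_def exp_add[symmetric] algebra_simps)

lemma jensen_w:
  fixes w y :: "'a \<Rightarrow> real"
  assumes "finite A" "\<forall>a\<in>A. 0 \<le> w a" "(\<Sum>a\<in>A. w a) = 1"
  shows "2 powr (\<Sum>a\<in>A. w a * y a) \<le> (\<Sum>a\<in>A. w a * 2 powr (y a))"
proof -
  define m where "m = (\<Sum>a\<in>A. w a * y a)"
  have "w a * (2 powr m * (1 + (y a - m) * ln 2)) \<le> w a * 2 powr (y a)" if "a \<in> A" for a
  proof -
    have "2 powr m * (1 + (y a - m) * ln 2) \<le> 2 powr m * exp ((y a - m) * ln 2)"
      by (intro mult_left_mono) auto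
    also have "\<dots> = 2 powr (y a)" by (simp add: powr2_split[of "y a" m])
    finally show ?thesis using assms(2) that by (intro mult_left_mono) auto
  qed
  then have "(\<Sum>a\<in>A. w a * (2 powr m * (1 + (y a - m) * ln 2))) \<le> (\<Sum>a\<in>A. w a * 2 powr (y a))"
    by (rule sum_mono)
  moreover have "(\<Sum>a\<in>A. w a * (2 powr m * (1 + (y a - m) * ln 2)))
      = 2 powr m * ((\<Sum>a\<in>A. w a) + ln 2 * ((\<Sum>a\<in>A. w a * y a) - m * (\<Sum>a\<in>A. w a)))"
    by (simp add: algebra_simps sum.distrib sum_distrib_left sum_distrib_right sum_subtractf)
  ultimately show ?thesis using assms(3) unfolding m_def by simp
qed

lemma jensen_card:
  fixes y :: "'a \<Rightarrow> real"
  assumes "finite S" "S \<noteq> {}"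
  shows "real (card S) * 2 powr ((\<Sum>x\<in>S. y x) / real (card S)) \<le> (\<Sum>x\<in>S. 2 powr (y x))"
proof -
  have c: "real (card S) > 0" using assms by (simp add: card_gt_0_iff)
  have "2 powr (\<Sum>x\<in>S. (1 / real (card S)) * y x) \<le> (\<Sum>x\<in>S. (1 / real (card S)) * 2 powr (y x))"
    by (rule jensen_w) (use assms c in auto)
  then have "2 powr ((\<Sum>x\<in>S. y x) / real (card S)) \<le> (\<Sum>x\<in>S. 2 powr (y x)) / real (card S)"
    by (simp add: sum_distrib_left[symmetric] sum_divide_distrib[symmetric])
  then show ?thesis using c by (simp add: field_simps)
qed

lemma prod_list_powr2: "prod_list (map (\<lambda>a. (2::real) powr f a) x) = 2 powr (sum_list (map f x))"
  by (induction x) (simp_all add: powr_add)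

lemma sum_list_affine: "sum_list (map (\<lambda>a. c * f a + d) x) = c * sum_list (map f x) + real (length x) * (d::real)"
  by (induction x) (simp_all add: algebra_simps)

lemma entropy_le_log:
  fixes Q :: "'a \<Rightarrow> real"
  assumes "finite A" "\<forall>a\<in>A. 0 < Q a" "(\<Sum>a\<in>A. Q a) = 1"
  shows "(\<Sum>a\<in>A. Q a * (- log 2 (Q a))) \<le> log 2 (real (card A))"
proof -
  have ne: "A \<noteq> {}" using assms(3) by auto
  then have c: "real (card A) > 0" using assms(1) by (simp add: card_gt_0_iff)
  have "Q a * ln (1 / (real (card A) * Q a)) \<le> Q a * (1 / (real (card A) * Q a) - 1)" if "a \<in> A" for a
    using assms(2) that c by (intro mult_left_mono ln_le_minus_one) auto
  then have "(\<Sum>a\<in>A. Q a * ln (1 / (real (card A) * Q a))) \<le> (\<Sum>a\<in>A. Q a * (1 / (real (card A) * Q a) - 1))"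
    by (rule sum_mono)
  also have "\<dots> = (\<Sum>a\<in>A. 1 / real (card A) - Q a)"
    using assms(2) c by (intro sum.cong) (auto simp: field_simps)
  also have "\<dots> = 0" using assms(3) c by (simp add: sum_subtractf)
  finally have le: "(\<Sum>a\<in>A. Q a * ln (1 / (real (card A) * Q a))) \<le> 0" .
  have "(\<Sum>a\<in>A. Q a * ln (1 / (real (card A) * Q a))) = (\<Sum>a\<in>A. Q a * (- ln (Q a))) - ln (real (card A)) * (\<Sum>a\<in>A. Q a)"
  proof -
    have "(\<Sum>a\<in>A. Q a * ln (1 / (real (card A) * Q a))) = (\<Sum>a\<in>A. Q a * (- ln (Q a)) - ln (real (card A)) * Q a)"
      using assms(2) c by (intro sum.cong) (auto simp: ln_div ln_mult algebra_simps)
    then show ?thesis by (simp add: sum_subtractf sum_distrib_left)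
  qed
  with le assms(3) have "(\<Sum>a\<in>A. Q a * (- ln (Q a))) \<le> ln (real (card A))" by simp
  then have "(\<Sum>a\<in>A. Q a * (- ln (Q a))) / ln 2 \<le> ln (real (card A)) / ln 2"
    by (simp add: divide_right_mono)
  then show ?thesis by (simp add: log_def sum_divide_distrib)
qed


lemma cov_pos:
  fixes Q l w :: "'a \<Rightarrow> real"
  assumes fin: "finite A" and pos: "\<forall>a\<in>A. 0 < Q a" and s1: "(\<Sum>a\<in>A. Q a) = 1"
    and mono: "\<forall>a\<in>A. \<forall>b\<in>A. l a < l b \<longrightarrow> w a < w b"
    and d: "a0 \<in> A" "b0 \<in> A" "l a0 \<noteq> l b0"
  shows "(\<Sum>a\<in>A. Q a * l a) * (\<Sum>a\<in>A. Q a * w a) < (\<Sum>a\<in>A. Q a * w a * l a)"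
proof -
  define Sl where "Sl = (\<Sum>a\<in>A. Q a * l a)"
  define Sw where "Sw = (\<Sum>a\<in>A. Q a * w a)"
  define X where "X = (\<Sum>a\<in>A. Q a * w a * l a)"
  have term_nn: "0 \<le> (l a - l b) * (w a - w b)" if "a \<in> A" "b \<in> A" for a b
  proof (cases "l a < l b")
    case True then show ?thesis using mono that by (intro mult_nonpos_nonpos) force+
  next
    case False
    then show ?thesis
    proof (cases "l b < l a")
      case True then show ?thesis using mono that by (intro mult_nonneg_nonneg) force+
    next
      case False then have "l a = l b" using \<open>\<not> l a < l b\<close> by simp
      then show ?thesis by simp
    qed
  qed
  have term_pos: "0 < (l a0 - l b0) * (w a0 - w b0)"
  proof (cases "l a0 < l b0")
    case True then show ?thesis using mono d by (intro mult_neg_neg) force+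
  next
    case False then have "l b0 < l a0" using d(3) by simp
    then show ?thesis using mono d by (intro mult_pos_pos) force+
  qed
  have inner: "(\<Sum>b\<in>A. Q a * Q b * ((l a - l b) * (w a - w b)))
      = Q a * w a * l a - Q a * l a * Sw - Q a * w a * Sl + Q a * X" for a
  proof -
    have "(\<Sum>b\<in>A. Q a * Q b * ((l a - l b) * (w a - w b)))
        = (\<Sum>b\<in>A. Q a * l a * w a * Q b - Q a * l a * (Q b * w b) - Q a * w a * (Q b * l b) + Q a * (Q b * w b * l b))"
      by (intro sum.cong) (auto simp: algebra_simps)
    also have "\<dots> = Q a * l a * w a * (\<Sum>b\<in>A. Q b) - Q a * l a * Sw - Q a * w a * Sl + Q a * X"
      unfolding Sw_def Sl_def X_def by (simp add: sum.distrib sum_subtractf sum_distrib_left)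
    finally show ?thesis using s1 by (simp add: algebra_simps)
  qed
  have iden: "(\<Sum>a\<in>A. \<Sum>b\<in>A. Q a * Q b * ((l a - l b) * (w a - w b))) = X - Sl * Sw - Sw * Sl + X"
  proof -
    have "(\<Sum>a\<in>A. \<Sum>b\<in>A. Q a * Q b * ((l a - l b) * (w a - w b)))
        = (\<Sum>a\<in>A. Q a * w a * l a - Q a * l a * Sw - Q a * w a * Sl + Q a * X)"
      by (simp add: inner)
    also have "\<dots> = (\<Sum>a\<in>A. Q a * w a * l a) - (\<Sum>a\<in>A. Q a * l a) * Sw - (\<Sum>a\<in>A. Q a * w a) * Sl + (\<Sum>a\<in>A. Q a) * X"
      by (simp only: sum.distrib sum_subtractf sum_distrib_right)
    also have "\<dots> = X - Sl * Sw - Sw * Sl + X * (\<Sum>a\<in>A. Q a)"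
      unfolding Sw_def Sl_def X_def by simp
    finally show ?thesis using s1 by simp
  qed
  have tnn: "0 \<le> Q a * Q b * ((l a - l b) * (w a - w b))" if "a \<in> A" "b \<in> A" for a b
    using pos that by (intro mult_nonneg_nonneg[OF mult_nonneg_nonneg term_nn]) (auto simp: less_imp_le)
  have tp: "0 < Q a0 * Q b0 * ((l a0 - l b0) * (w a0 - w b0))"
    using pos d by (intro mult_pos_pos[OF mult_pos_pos term_pos]) auto
  have "0 < (\<Sum>a\<in>A. \<Sum>b\<in>A. Q a * Q b * ((l a - l b) * (w a - w b)))"
  proof (rule sum_pos2[OF fin d(1)])
    show "0 < (\<Sum>b\<in>A. Q a0 * Q b * ((l a0 - l b) * (w a0 - w b)))"
      using tp tnn d by (intro sum_pos2[OF fin d(2)]) auto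
    show "0 \<le> (\<Sum>b\<in>A. Q a * Q b * ((l a - l b) * (w a - w b)))" if "a \<in> A" for a
      using tnn that by (auto intro!: sum_nonneg)
  qed
  with iden show ?thesis unfolding Sw_def Sl_def X_def by (simp add: algebra_simps)
qed


lemma lower_card:
  fixes L :: nat and Q l :: "nat \<Rightarrow> real" and I H0 :: real
  assumes pos: "\<forall>a\<in>{1..L}. 0 < Q a" and s1: "(\<Sum>a\<in>{1..L}. Q a) = 1"
    and ldef: "l = (\<lambda>a. - log 2 (Q a))"
    and H0def: "H0 = (\<Sum>a\<in>{1..L}. Q a * l a)"
    and d: "a0 \<in> {1..L}" "b0 \<in> {1..L}" "l a0 \<noteq> l b0"
    and HI: "H0 < I"
  shows "\<exists>\<epsilon>>0. \<exists>N. \<forall>n\<ge>N. 0 < n \<and> {x\<in>seqs L n. sum_list (map l x) \<le> real n * I} \<noteq> {} \<and>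
           real n * (H0 + 2*\<epsilon>) - 1 \<le> log 2 (real (card {x\<in>seqs L n. sum_list (map l x) \<le> real n * I}))"
proof -
  define A where "A = {1..L}"
  have fin: "finite A" unfolding A_def by simp
  have Qp: "0 < Q a" if "a \<in> A" for a using bspec[OF pos that[unfolded A_def]] .
  have Qnn: "0 \<le> Q a" if "a \<in> A" for a using Qp[OF that] by simp
  have Q1: "Q a \<le> 1" if "a \<in> A" for a
  proof -
    have "Q a \<le> (\<Sum>b\<in>A. Q b)" using pos that fin by (intro member_le_sum) (auto simp: A_def less_imp_le)
    then show ?thesis using s1 by (simp add: A_def)
  qed
  have l_nn: "0 \<le> l a" if "a \<in> A" for a
    using Q1[OF that] pos that by (simp add: ldef A_def)
  have Qpow: "Q a = 2 powr (- l a)" if "a \<in> A" for a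
    using pos that by (simp add: ldef A_def)
  define M where "M = (\<Sum>a\<in>A. l a)"
  have lM: "l a \<le> M" if "a \<in> A" for a
    unfolding M_def using fin that l_nn by (intro member_le_sum) auto
  have H0_nn: "0 \<le> H0" unfolding H0def using pos l_nn by (auto simp: A_def intro!: sum_nonneg)
  have "((\<lambda>t. 2 powr (t*M) * H0) \<longlongrightarrow> 2 powr (0*M) * H0) (at_right 0)"
    by (intro tendsto_intros) auto
  then have "eventually (\<lambda>t. 2 powr (t*M) * H0 < I) (at_right 0)"
    using HI by (intro order_tendstoD(2)) auto
  then obtain b where b: "b > 0" "\<And>t. t > 0 \<Longrightarrow> t < b \<Longrightarrow> 2 powr (t*M) * H0 < I"
    unfolding eventually_at_right_field by auto
  define t where "t = min (b/2) (1/2)"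
  have t: "0 < t" "t < 1" "2 powr (t*M) * H0 < I" using b unfolding t_def by auto
  define u where "u = 1 - t"
  have u: "0 < u" using t unfolding u_def by simp
  define w where "w = (\<lambda>a. (2::real) powr (t * l a))"
  have w1: "1 \<le> w a" if "a \<in> A" for a unfolding w_def using t l_nn[OF that] by (intro ge_one_powr_ge_zero) auto
  have wM: "w a \<le> 2 powr (t*M)" if "a \<in> A" for a unfolding w_def using t lM[OF that] by simp
  define Z where "Z = (\<Sum>a\<in>A. Q a * w a)"
  have Z1: "1 \<le> Z"
  proof -
    have "(\<Sum>a\<in>A. Q a * 1) \<le> Z" unfolding Z_def using pos w1 by (intro sum_mono mult_left_mono) (auto simp: A_def less_imp_le)
    then show ?thesis using s1 by (simp add: A_def)
  qed
  define R where "R = (\<lambda>a. (2::real) powr (- (u * l a) - log 2 Z))"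
  have RQ: "R a = Q a * w a / Z" if "a \<in> A" for a
  proof -
    have "R a = 2 powr (- l a + t * l a) / 2 powr (log 2 Z)"
      unfolding R_def u_def by (simp add: powr_diff powr_add algebra_simps)
    also have "\<dots> = Q a * w a / Z"
    proof -
      have "2 powr (- l a + t * l a) = 2 powr (- l a) * (2::real) powr (t * l a)" by (rule powr_add)
      then show ?thesis using Z1 Qpow[OF that] unfolding w_def by simp
    qed
    finally show ?thesis .
  qed
  have R_sum: "(\<Sum>a\<in>{1..L}. R a) = 1"
  proof -
    have "(\<Sum>a\<in>A. R a) = (\<Sum>a\<in>A. Q a * w a) / Z" using RQ by (simp add: sum_divide_distrib)
    then show ?thesis using Z1 unfolding Z_def A_def by simp
  qed
  define \<mu> where "\<mu> = (\<Sum>a\<in>A. R a * l a)"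
  have mu_eq: "\<mu> = (\<Sum>a\<in>A. Q a * w a * l a) / Z"
    unfolding \<mu>_def using RQ by (simp add: sum_divide_distrib)
  have cov: "H0 * Z < (\<Sum>a\<in>A. Q a * w a * l a)"
  proof -
    have "(\<Sum>a\<in>A. Q a * l a) * (\<Sum>a\<in>A. Q a * w a) < (\<Sum>a\<in>A. Q a * w a * l a)"
    proof (rule cov_pos[OF fin _ _ _ d[folded A_def]])
      show "\<forall>a\<in>A. 0 < Q a" using pos by (simp add: A_def)
      show "(\<Sum>a\<in>A. Q a) = 1" using s1 by (simp add: A_def)
      show "\<forall>a\<in>A. \<forall>b\<in>A. l a < l b \<longrightarrow> w a < w b" unfolding w_def using t by auto
    qed
    then show ?thesis unfolding H0def Z_def A_def .
  qed
  have mu_gt: "H0 < \<mu>" using cov Z1 unfolding mu_eq by (simp add: field_simps)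
  have mu_le: "\<mu> \<le> 2 powr (t*M) * H0"
  proof -
    have "(\<Sum>a\<in>A. Q a * w a * l a) \<le> (\<Sum>a\<in>A. 2 powr (t*M) * (Q a * l a))"
    proof (rule sum_mono)
      fix a assume a: "a \<in> A"
      have "w a * l a \<le> 2 powr (t*M) * l a" using wM[OF a] l_nn[OF a] by (rule mult_right_mono)
      then have "Q a * (w a * l a) \<le> Q a * (2 powr (t*M) * l a)"
        using pos a by (intro mult_left_mono) (auto simp: A_def less_imp_le)
      then show "Q a * w a * l a \<le> 2 powr (t*M) * (Q a * l a)" by (simp add: algebra_simps)
    qed
    also have "\<dots> = 2 powr (t*M) * H0" unfolding H0def A_def by (simp add: sum_distrib_left)
    finally have n: "(\<Sum>a\<in>A. Q a * w a * l a) \<le> 2 powr (t*M) * H0" .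
    have "0 \<le> (\<Sum>a\<in>A. Q a * w a * l a)"
    proof (rule sum_nonneg)
      fix a assume a: "a \<in> A"
      have "0 \<le> Q a" "0 \<le> w a" "0 \<le> l a" using Qnn[OF a] w1[OF a] l_nn[OF a] by auto
      then show "0 \<le> Q a * w a * l a" by simp
    qed
    then have "(\<Sum>a\<in>A. Q a * w a * l a) / Z \<le> (\<Sum>a\<in>A. Q a * w a * l a)"
      using Z1 by (simp add: divide_le_eq mult_le_cancel_left1 mult_le_cancel_right1)
    then show ?thesis using n unfolding mu_eq by simp
  qed
  have mu_lt: "\<mu> < I" using mu_le t by simp
  have logZ: "t * H0 \<le> log 2 Z"
  proof -
    have "2 powr (\<Sum>a\<in>A. Q a * (t * l a)) \<le> (\<Sum>a\<in>A. Q a * 2 powr (t * l a))"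
      using fin pos s1 by (intro jensen_w) (auto simp: A_def less_imp_le)
    also have "\<dots> = Z" unfolding Z_def w_def ..
    finally have "2 powr (t * H0) \<le> Z" unfolding H0def A_def by (simp add: sum_distrib_left algebra_simps)
    then have "log 2 (2 powr (t * H0)) \<le> log 2 Z" using Z1 by (subst log_le_cancel_iff) auto
    then show ?thesis by simp
  qed
  define \<delta> where "\<delta> = min ((\<mu> - H0)/2) (I - \<mu>)"
  have \<delta>: "0 < \<delta>" "\<delta> \<le> (\<mu> - H0)/2" "\<delta> \<le> I - \<mu>" using mu_gt mu_lt unfolding \<delta>_def by (auto simp: min_def)
  define g where "g = (\<lambda>a. l a - \<mu>)"
  have g0: "(\<Sum>a\<in>{1..L}. R a * g a) = 0"
    using R_sum unfolding g_def \<mu>_def A_def by (simp add: algebra_simps sum_subtractf sum_distrib_right[symmetric])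
  define \<sigma> where "\<sigma> = (\<Sum>a\<in>{1..L}. R a * (g a)^2)"
  define \<epsilon> where "\<epsilon> = u * (\<mu> - H0) / 4"
  have \<epsilon>: "0 < \<epsilon>" unfolding \<epsilon>_def using u mu_gt by simp
  define N where "N = nat \<lceil>2 * \<sigma> / \<delta>^2\<rceil> + 1"
  have main: "0 < n \<and> {x\<in>seqs L n. sum_list (map l x) \<le> real n * I} \<noteq> {} \<and>
           real n * (H0 + 2*\<epsilon>) - 1 \<le> log 2 (real (card {x\<in>seqs L n. sum_list (map l x) \<le> real n * I}))"
    if nN: "n \<ge> N" for n
  proof -
    have n0: "0 < n" using nN unfolding N_def by simp
    have nbig: "2 * \<sigma> / \<delta>^2 \<le> real n" using nN unfolding N_def by linarith
    define Sn where "Sn = {x\<in>seqs L n. sum_list (map l x) \<le> real n * I}"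
    define B where "B = {x\<in>seqs L n. real n * \<delta> \<le> \<bar>sum_list (map l x) - real n * \<mu>\<bar>}"
    define G where "G = {x\<in>seqs L n. \<bar>sum_list (map l x) - real n * \<mu>\<bar> < real n * \<delta>}"
    define pR where "pR = (\<lambda>x. prod_list (map R x))"
    have pR_nn: "0 \<le> pR x" for x unfolding pR_def R_def by (induction x) auto
    have finS: "finite (seqs L n)" by (rule finite_seqs)
    have sumg: "sum_list (map g x) = sum_list (map l x) - real n * \<mu>" if "x \<in> seqs L n" for x
    proof -
      have "sum_list (map g x) = sum_list (map (\<lambda>a. 1 * l a + (- \<mu>)) x)" unfolding g_def by simp
      also have "\<dots> = 1 * sum_list (map l x) + real (length x) * (- \<mu>)" by (rule sum_list_affine)
      also have "\<dots> = sum_list (map l x) - real n * \<mu>" using that by (simp add: seqs_def)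
      finally show ?thesis .
    qed
    have tot: "(\<Sum>x\<in>seqs L n. pR x) = 1" unfolding pR_def using R_sum by (simp add: sum_prod_seqs)
    have var: "(\<Sum>x\<in>seqs L n. pR x * (sum_list (map l x) - real n * \<mu>)^2) = real n * \<sigma>"
    proof -
      have "(\<Sum>x\<in>seqs L n. pR x * (sum_list (map l x) - real n * \<mu>)^2)
          = (\<Sum>x\<in>seqs L n. prod_list (map R x) * (sum_list (map g x))^2)"
        unfolding pR_def using sumg by (intro sum.cong) auto
      also have "\<dots> = real n * \<sigma>" unfolding \<sigma>_def by (rule moment2[OF R_sum g0])
      finally show ?thesis .
    qed
    have nd: "0 < real n * \<delta>" using n0 \<delta> by simp
    have "(\<Sum>x\<in>B. pR x) \<le> (\<Sum>x\<in>B. pR x * (sum_list (map l x) - real n * \<mu>)^2 / (real n * \<delta>)^2)"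
    proof (rule sum_mono)
      fix x assume "x \<in> B"
      then have "(real n * \<delta>)^2 \<le> (sum_list (map l x) - real n * \<mu>)^2"
        unfolding B_def using nd by (auto intro!: power_mono simp: abs_le_square_iff[symmetric])
      moreover have "0 < (real n * \<delta>)^2" using nd by (intro zero_less_power) 
      ultimately have "1 \<le> (sum_list (map l x) - real n * \<mu>)^2 / (real n * \<delta>)^2" by (simp add: le_divide_eq_1_pos)
      then show "pR x \<le> pR x * (sum_list (map l x) - real n * \<mu>)^2 / (real n * \<delta>)^2"
        using pR_nn[of x] by (metis mult.right_neutral mult_left_mono times_divide_eq_right)
    qed
    also have "\<dots> \<le> (\<Sum>x\<in>seqs L n. pR x * (sum_list (map l x) - real n * \<mu>)^2 / (real n * \<delta>)^2)"
      using finS pR_nn by (intro sum_mono2) (auto simp: B_def)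
    also have "\<dots> = real n * \<sigma> / (real n * \<delta>)^2" using var by (simp add: sum_divide_distrib[symmetric])
    also have "\<dots> = \<sigma> / (real n * \<delta>^2)" using n0 by (simp add: power2_eq_square field_simps)
    also have "\<dots> \<le> 1/2"
      using nbig \<delta> n0 by (simp add: field_simps)
    finally have Bsmall: "(\<Sum>x\<in>B. pR x) \<le> 1/2" .
    have "seqs L n = G \<union> B" "G \<inter> B = {}" unfolding G_def B_def by auto
    then have "(\<Sum>x\<in>seqs L n. pR x) = (\<Sum>x\<in>G. pR x) + (\<Sum>x\<in>B. pR x)"
      using finS by (metis finite_Un sum.union_disjoint)
    with tot Bsmall have Gbig: "1/2 \<le> (\<Sum>x\<in>G. pR x)" by simp
    define \<beta> where "\<beta> = (2::real) powr (- (u * (real n * (\<mu> - \<delta>))) - real n * log 2 Z)"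
    have pRG: "pR x \<le> \<beta>" if "x \<in> G" for x
    proof -
      have len: "length x = n" using that by (simp add: G_def seqs_def)
      have Rf: "R = (\<lambda>a. 2 powr ((- u) * l a + (- log 2 Z)))" by (simp add: R_def fun_eq_iff)
      have "pR x = 2 powr (sum_list (map (\<lambda>a. (- u) * l a + (- log 2 Z)) x))"
        unfolding pR_def Rf by (rule prod_list_powr2)
      also have "sum_list (map (\<lambda>a. (- u) * l a + (- log 2 Z)) x) = (- u) * sum_list (map l x) + real (length x) * (- log 2 Z)"
        by (rule sum_list_affine)
      also have "2 powr ((- u) * sum_list (map l x) + real (length x) * (- log 2 Z)) = 2 powr (- (u * sum_list (map l x)) - real n * log 2 Z)"
        by (simp add: len)
      also have "\<dots> \<le> \<beta>" unfolding \<beta>_def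
      proof (subst powr_le_cancel_iff)
        have "real n * (\<mu> - \<delta>) \<le> sum_list (map l x)" using that unfolding G_def by (auto simp: algebra_simps)
        then show "- (u * sum_list (map l x)) - real n * log 2 Z \<le> - (u * (real n * (\<mu> - \<delta>))) - real n * log 2 Z"
          using u by (simp add: mult_left_mono)
      qed auto
      finally show ?thesis .
    qed
    have GS: "G \<subseteq> Sn"
    proof
      fix x assume "x \<in> G"
      then have "sum_list (map l x) < real n * \<mu> + real n * \<delta>" "x \<in> seqs L n" unfolding G_def by auto
      moreover have "real n * \<mu> + real n * \<delta> \<le> real n * I" 
      proof -
        have "real n * (\<mu> + \<delta>) \<le> real n * I" using \<delta>(3) by (intro mult_left_mono) auto
        then show ?thesis by (simp add: algebra_simps)
      qed
      ultimately show "x \<in> Sn" unfolding Sn_def by auto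
    qed
    have finSn: "finite Sn" unfolding Sn_def using finS by simp
    have "(\<Sum>x\<in>G. pR x) \<le> (\<Sum>x\<in>G. \<beta>)" using pRG by (rule sum_mono)
    also have "\<dots> = real (card G) * \<beta>" by simp
    also have "\<dots> \<le> real (card Sn) * \<beta>" unfolding \<beta>_def
      using card_mono[OF finSn GS] by (intro mult_right_mono) auto
    finally have cb: "1/2 \<le> real (card Sn) * \<beta>" using Gbig by simp
    have bpos: "0 < \<beta>" unfolding \<beta>_def by simp
    have cpos: "0 < real (card Sn)" proof (rule ccontr)
      assume "\<not> 0 < real (card Sn)"
      then have "card Sn = 0" by simp
      with cb show False by simp
    qed
    have "log 2 (1/2) \<le> log 2 (real (card Sn) * \<beta>)" using cb by (subst log_le_cancel_iff) auto
    also have "\<dots> = log 2 (real (card Sn)) + (- (u * (real n * (\<mu> - \<delta>))) - real n * log 2 Z)"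
      using cpos bpos by (simp add: log_mult \<beta>_def)
    finally have lc: "real n * (u * (\<mu> - \<delta>) + log 2 Z) - 1 \<le> log 2 (real (card Sn))"
      by (simp add: log_divide algebra_simps)
    have "u * (\<mu> - \<delta>) + log 2 Z \<ge> H0 + 2 * \<epsilon>"
    proof -
      have "u * (\<mu> - \<delta>) \<ge> u * ((\<mu> + H0)/2)" using \<delta>(2) u by (intro mult_left_mono) auto
      then have i1: "u * \<mu> - u * \<delta> \<ge> u * \<mu> / 2 + u * H0 / 2" by (simp add: algebra_simps add_divide_distrib)
      have i2: "t * H0 = H0 - u * H0" unfolding u_def by (simp add: algebra_simps)
      have i3: "2 * \<epsilon> = u * \<mu> / 2 - u * H0 / 2" unfolding \<epsilon>_def by (simp add: field_simps)
      have i4: "u * (\<mu> - \<delta>) = u * \<mu> - u * \<delta>" by (simp add: algebra_simps)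
      show ?thesis using i1 i2 i3 i4 logZ by linarith
    qed
    then have "real n * (H0 + 2 * \<epsilon>) \<le> real n * (u * (\<mu> - \<delta>) + log 2 Z)" by (intro mult_left_mono) auto
    with lc have "real n * (H0 + 2 * \<epsilon>) - 1 \<le> log 2 (real (card Sn))" by simp
    moreover have "Sn \<noteq> {}" using cpos by auto
    ultimately show ?thesis using n0 unfolding Sn_def by simp
  qed
  show ?thesis using \<epsilon> main by blast
qed


lemma sum_list_count_real:
  fixes f :: "'a \<Rightarrow> real"
  assumes "finite X"
  shows "set xs \<subseteq> X \<Longrightarrow> sum_list (map f xs) = (\<Sum>a\<in>X. real (count_list xs a) * f a)"
proof (induction xs)
  case Nil then show ?case by simp
next
  case (Cons y ys)
  have "(\<Sum>a\<in>X. real (count_list (y#ys) a) * f a) = (\<Sum>a\<in>X. real (count_list ys a) * f a + (if y = a then f a else 0))"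
    by (intro sum.cong) (auto simp: algebra_simps)
  also have "\<dots> = (\<Sum>a\<in>X. real (count_list ys a) * f a) + f y"
    using Cons.prems assms by (simp add: sum.distrib sum.delta)
  finally show ?case using Cons by simp
qed

lemma ce_formula:
  fixes Q :: "nat \<Rightarrow> real"
  assumes "x \<in> seqs L n" "0 < n"
  shows "cross_entropy {1..L} (emp_pmf x) Q = sum_list (map (\<lambda>a. - log 2 (Q a)) x) / real n"
proof -
  have len: "length x = n" and sx: "set x \<subseteq> {1..L}" using assms(1) by (auto simp: seqs_def)
  have "cross_entropy {1..L} (emp_pmf x) Q = (\<Sum>a\<in>{a\<in>{1..L}. 0 < emp_pmf x a}. emp_pmf x a * (- log 2 (Q a)))"
    unfolding cross_entropy_def by (simp add: sum_negf[symmetric])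
  also have "\<dots> = (\<Sum>a\<in>{1..L}. emp_pmf x a * (- log 2 (Q a)))"
  proof (rule sum.mono_neutral_left)
    show "\<forall>i\<in>{1..L} - {a \<in> {1..L}. 0 < emp_pmf x a}. emp_pmf x i * - log 2 (Q i) = 0"
    proof
      fix i assume "i \<in> {1..L} - {a \<in> {1..L}. 0 < emp_pmf x a}"
      then have "\<not> 0 < emp_pmf x i" by auto
      moreover have "0 \<le> emp_pmf x i" unfolding emp_pmf_def by simp
      ultimately have "emp_pmf x i = 0" by simp
      then show "emp_pmf x i * - log 2 (Q i) = 0" by simp
    qed
  qed auto
  also have "\<dots> = (\<Sum>a\<in>{1..L}. real (count_list x a) * (- log 2 (Q a))) / real n"
    unfolding emp_pmf_def len by (simp add: sum_divide_distrib)
  also have "(\<Sum>a\<in>{1..L}. real (count_list x a) * (- log 2 (Q a))) = sum_list (map (\<lambda>a. - log 2 (Q a)) x)"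
    using sum_list_count_real[OF _ sx, of "\<lambda>a. - log 2 (Q a)"] by simp
  finally show ?thesis .
qed

lemma iid_powr:
  fixes Q :: "nat \<Rightarrow> real"
  assumes "\<forall>a\<in>{1..L}. 0 < Q a" "x \<in> seqs L n"
  shows "prod_list (map (\<lambda>a. Q a powr u) x) = 2 powr (- u * sum_list (map (\<lambda>a. - log 2 (Q a)) x))"
proof -
  have sx: "set x \<subseteq> {1..L}" using assms(2) by (auto simp: seqs_def)
  have "map (\<lambda>a. Q a powr u) x = map (\<lambda>a. 2 powr ((- u) * (- log 2 (Q a)) + 0)) x"
  proof (rule map_cong[OF refl])
    fix a assume "a \<in> set x"
    then have "0 < Q a" using assms(1) sx by auto
    then have "Q a powr u = (2 powr (log 2 (Q a))) powr u" by simp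
    also have "\<dots> = 2 powr ((- u) * (- log 2 (Q a)) + 0)" by (simp add: powr_powr mult.commute)
    finally show "Q a powr u = 2 powr ((- u) * (- log 2 (Q a)) + 0)" .
  qed
  then have "prod_list (map (\<lambda>a. Q a powr u) x) = 2 powr (sum_list (map (\<lambda>a. (- u) * (- log 2 (Q a)) + 0) x))"
    by (simp only: prod_list_powr2)
  also have "sum_list (map (\<lambda>a. (- u) * (- log 2 (Q a)) + 0) x) = (- u) * sum_list (map (\<lambda>a. - log 2 (Q a)) x) + real (length x) * 0"
    by (rule sum_list_affine)
  finally show ?thesis by simp
qed

lemma div_formula:
  fixes Q :: "nat \<Rightarrow> real"
  assumes pos: "\<forall>a\<in>{1..L}. 0 < Q a" and SS: "S \<subseteq> seqs L n" "S \<noteq> {}"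
  shows "divergence (seqs L n) (uniform_on S) (iid_pmf Q)
        = (\<Sum>x\<in>S. sum_list (map (\<lambda>a. - log 2 (Q a)) x)) / real (card S) - log 2 (real (card S))"
proof -
  define c where "c = real (card S)"
  define \<Lambda> where "\<Lambda> = (\<lambda>x. sum_list (map (\<lambda>a. - log 2 (Q a)) x))"
  have finS: "finite S" using SS(1) finite_seqs by (rule finite_subset)
  have c: "0 < c" unfolding c_def using finS SS(2) by (simp add: card_gt_0_iff)
  have set_eq: "{x\<in>seqs L n. 0 < uniform_on S x} = S"
    using SS c unfolding uniform_on_def c_def by auto
  have trm: "uniform_on S x * log 2 (uniform_on S x / iid_pmf Q x) = (1/c) * (\<Lambda> x - log 2 c)" if "x \<in> S" for x
  proof -
    have "map Q x = map (\<lambda>a. Q a powr 1) x"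
    proof (intro map_cong refl)
      fix a assume "a \<in> set x"
      moreover have "x \<in> seqs L n" using that SS(1) by blast
      then have "set x \<subseteq> {1..L}" by (simp add: seqs_def)
      ultimately have "a \<in> {1..L}" by blast
      then have "0 < Q a" using pos by blast
      then show "Q a = Q a powr 1" by simp
    qed
    then have "iid_pmf Q x = prod_list (map (\<lambda>a. Q a powr 1) x)" unfolding iid_pmf_def by (simp only:)
    also have "\<dots> = 2 powr (- 1 * \<Lambda> x)"
      unfolding \<Lambda>_def using that SS(1) by (intro iid_powr[OF pos]) auto
    finally have iid: "iid_pmf Q x = 2 powr (- \<Lambda> x)" by simp
    have "log 2 ((1/c) / 2 powr (- \<Lambda> x)) = \<Lambda> x - log 2 c"
      using c by (simp add: log_divide log_mult)
    then show ?thesis using that unfolding uniform_on_def c_def iid by simp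
  qed
  have "divergence (seqs L n) (uniform_on S) (iid_pmf Q) = (\<Sum>x\<in>S. (1/c) * (\<Lambda> x - log 2 c))"
    unfolding divergence_def set_eq using trm by (rule sum.cong[OF refl])
  also have "\<dots> = (\<Sum>x\<in>S. \<Lambda> x) / c - log 2 c"
  proof -
    have "(\<Sum>x\<in>S. (1/c) * (\<Lambda> x - log 2 c)) = (1/c) * ((\<Sum>x\<in>S. \<Lambda> x) - c * log 2 c)"
      by (simp add: sum_divide_distrib[symmetric] sum_subtractf c_def)
    then show ?thesis using c by (simp add: field_simps)
  qed
  finally show ?thesis unfolding c_def \<Lambda>_def .
qed

lemma tilt_bound:
  fixes Q :: "nat \<Rightarrow> real"
  assumes pos: "\<forall>a\<in>{1..L}. 0 < Q a" and SS: "S \<subseteq> seqs L n" "S \<noteq> {}" and L: "0 < L"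
  shows "log 2 (real (card S)) \<le> u * ((\<Sum>x\<in>S. sum_list (map (\<lambda>a. - log 2 (Q a)) x)) / real (card S))
           + real n * log 2 (\<Sum>a\<in>{1..L}. Q a powr u)"
proof -
  define c where "c = real (card S)"
  define \<Lambda> where "\<Lambda> = (\<lambda>x. sum_list (map (\<lambda>a. - log 2 (Q a)) x))"
  define Z where "Z = (\<Sum>a\<in>{1..L}. Q a powr u)"
  have finS: "finite S" using SS(1) finite_seqs by (rule finite_subset)
  have c: "0 < c" unfolding c_def using finS SS(2) by (simp add: card_gt_0_iff)
  obtain x0 where "x0 \<in> S" using SS(2) by auto
  have "0 < Z" unfolding Z_def
  proof -
    have "{1..L} \<noteq> {}" using L by auto
    then obtain a where a: "a \<in> {1..L}" by blast
    have "0 < Q a" using pos a by blast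
    then show "0 < (\<Sum>a\<in>{1..L}. Q a powr u)" by (intro sum_pos2[OF _ a]) auto
  qed
  have "c * 2 powr ((\<Sum>x\<in>S. - u * \<Lambda> x) / c) \<le> (\<Sum>x\<in>S. 2 powr (- u * \<Lambda> x))"
    unfolding c_def by (rule jensen_card[OF finS SS(2)])
  also have "\<dots> \<le> (\<Sum>x\<in>seqs L n. 2 powr (- u * \<Lambda> x))"
    using SS(1) finite_seqs by (intro sum_mono2) auto
  also have "\<dots> = (\<Sum>x\<in>seqs L n. prod_list (map (\<lambda>a. Q a powr u) x))"
    using iid_powr[OF pos] unfolding \<Lambda>_def by (intro sum.cong) auto
  also have "\<dots> = Z ^ n" unfolding Z_def by (rule sum_prod_seqs)
  finally have ineq: "c * 2 powr (- u * ((\<Sum>x\<in>S. \<Lambda> x) / c)) \<le> Z ^ n"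
    by (simp add: sum_distrib_left[symmetric] sum_negf)
  have "log 2 (c * 2 powr (- u * ((\<Sum>x\<in>S. \<Lambda> x) / c))) \<le> log 2 (Z ^ n)"
    using ineq c \<open>0 < Z\<close> by (subst log_le_cancel_iff) auto
  then have "log 2 c - u * ((\<Sum>x\<in>S. \<Lambda> x) / c) \<le> real n * log 2 Z"
    using c \<open>0 < Z\<close> by (simp add: log_mult log_nat_power)
  then show ?thesis unfolding c_def \<Lambda>_def Z_def by simp
qed


lemma Z_bound:
  fixes Q :: "nat \<Rightarrow> real"
  assumes pos: "\<forall>a\<in>{1..L}. 0 < Q a" and s1: "(\<Sum>a\<in>{1..L}. Q a) = 1"
    and tb: "\<forall>a\<in>{1..L}. 0 \<le> t * (- log 2 (Q a)) * ln 2 \<and> t * (- log 2 (Q a)) * ln 2 \<le> 1"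
  shows "log 2 (\<Sum>a\<in>{1..L}. Q a powr (1 - t))
     \<le> t * (\<Sum>a\<in>{1..L}. Q a * (- log 2 (Q a))) + t^2 * ln 2 * (\<Sum>a\<in>{1..L}. Q a * (- log 2 (Q a))^2)"
proof -
  define l where "l = (\<lambda>a. - log 2 (Q a))"
  define Z where "Z = (\<Sum>a\<in>{1..L}. Q a powr (1 - t))"
  have ln2: "0 < ln (2::real)" by simp
  have tl: "Q a powr (1 - t) \<le> Q a * (1 + t * l a * ln 2 + (t * l a * ln 2)^2)" if a: "a \<in> {1..L}" for a
  proof -
    have q: "0 < Q a" using pos a by blast
    have "Q a powr (1 - t) = Q a * exp (t * l a * ln 2)"
      using q unfolding l_def by (simp add: powr_def log_def exp_diff algebra_simps exp_minus field_simps)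
    also have "\<dots> \<le> Q a * (1 + t * l a * ln 2 + (t * l a * ln 2)^2)"
      using q tb a unfolding l_def by (intro mult_left_mono exp_bound) auto
    finally show ?thesis .
  qed
  have "Z \<le> (\<Sum>a\<in>{1..L}. Q a * (1 + t * l a * ln 2 + (t * l a * ln 2)^2))"
    unfolding Z_def using tl by (rule sum_mono)
  also have "\<dots> = (\<Sum>a\<in>{1..L}. Q a) + t * ln 2 * (\<Sum>a\<in>{1..L}. Q a * l a) + t^2 * (ln 2)^2 * (\<Sum>a\<in>{1..L}. Q a * (l a)^2)"
    by (simp add: sum.distrib sum_distrib_left algebra_simps power2_eq_square)
  finally have Zle: "Z - 1 \<le> ln 2 * (t * (\<Sum>a\<in>{1..L}. Q a * l a) + t^2 * ln 2 * (\<Sum>a\<in>{1..L}. Q a * (l a)^2))"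
    using s1 by (simp add: algebra_simps power2_eq_square)
  have Zpos: "0 < Z"
  proof -
    have "{1..L} \<noteq> {}" proof assume "{1..L} = {}" then show False using s1 by simp qed
    then obtain a where a: "a \<in> {1..L}" by blast
    have "0 < Q a" using pos a by blast
    then show ?thesis unfolding Z_def by (intro sum_pos2[OF _ a]) auto
  qed
  have "log 2 Z = ln Z / ln 2" by (simp add: log_def)
  also have "\<dots> \<le> (Z - 1) / ln 2" using Zpos ln2 by (intro divide_right_mono ln_le_minus_one) auto
  also have "\<dots> \<le> t * (\<Sum>a\<in>{1..L}. Q a * l a) + t^2 * ln 2 * (\<Sum>a\<in>{1..L}. Q a * (l a)^2)"
    using Zle ln2 by (simp add: divide_le_eq mult.commute)
  finally show ?thesis unfolding Z_def l_def .
qed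


theorem lemma6:
  fixes L :: nat and Q :: "nat \<Rightarrow> real" and I :: real
  assumes "is_pmf {1..L} Q"
    and "\<forall>a\<in>{1..L}. 0 < Q a"
    and "\<exists>a\<in>{1..L}. Q a \<noteq> uniform_on {1..L} a"
    and "I > log 2 (real L)"
  shows "\<exists>c1 c2. 0 < c1 \<and> c1 \<le> c2 \<and>
           (\<forall>\<^sub>F n in sequentially.
              c1 * real n \<le> divergence (seqs L n) (uniform_on (typical_set L Q I n)) (iid_pmf Q)
            \<and> divergence (seqs L n) (uniform_on (typical_set L Q I n)) (iid_pmf Q) \<le> c2 * real n)"
proof -
  have pos: "\<forall>a\<in>{1..L}. 0 < Q a" using assms(2) .
  have Qp: "0 < Q a" if "a \<in> {1..L}" for a using pos that by blast
  have s1: "(\<Sum>a\<in>{1..L}. Q a) = 1" using assms(1) unfolding is_pmf_def by simp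
  have L0: "0 < L"
  proof (rule ccontr)
    assume "\<not> 0 < L" then have "L = 0" by simp
    then show False using s1 by simp
  qed
  have cardA: "card {1..L} = L" by simp
  define l where "l = (\<lambda>a. - log 2 (Q a))"
  define H0 where "H0 = (\<Sum>a\<in>{1..L}. Q a * l a)"
  define K2 where "K2 = (\<Sum>a\<in>{1..L}. Q a * (l a)^2)"
  define M where "M = (\<Sum>a\<in>{1..L}. l a)"
  have Q1: "Q a \<le> 1" if a: "a \<in> {1..L}" for a
  proof -
    have "Q a \<le> (\<Sum>b\<in>{1..L}. Q b)" using Qp a by (intro member_le_sum) (auto simp: less_imp_le)
    then show ?thesis using s1 by simp
  qed
  have l_nn: "0 \<le> l a" if "a \<in> {1..L}" for a using Q1[OF that] Qp[OF that] by (simp add: l_def)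
  have lM: "l a \<le> M" if "a \<in> {1..L}" for a unfolding M_def using that l_nn by (intro member_le_sum) auto
  have M_nn: "0 \<le> M" unfolding M_def using l_nn by (intro sum_nonneg) auto
  have K2_nn: "0 \<le> K2" unfolding K2_def using Qp by (intro sum_nonneg) (auto simp: less_imp_le)
  have diff: "\<exists>a0\<in>{1..L}. \<exists>b0\<in>{1..L}. l a0 \<noteq> l b0"
  proof (rule ccontr)
    assume "\<not> ?thesis"
    then have eq: "\<And>a b. a \<in> {1..L} \<Longrightarrow> b \<in> {1..L} \<Longrightarrow> l a = l b" by blast
    obtain a where a: "a \<in> {1..L}" "Q a \<noteq> uniform_on {1..L} a" using assms(3) by blast
    have "Q b = Q a" if b: "b \<in> {1..L}" for b
    proof -
      have "log 2 (Q b) = log 2 (Q a)" using eq[OF b a(1)] unfolding l_def by simp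
      then have "2 powr (log 2 (Q b)) = 2 powr (log 2 (Q a))" by simp
      then show ?thesis using Qp[OF b] Qp[OF a(1)] by simp
    qed
    then have "(\<Sum>b\<in>{1..L}. Q b) = (\<Sum>b\<in>{1..L}. Q a)" by (intro sum.cong) auto
    then have "real L * Q a = 1" using s1 by simp
    then have "Q a = 1 / real L" using L0 by (simp add: field_simps)
    then show False using a unfolding uniform_on_def by simp
  qed
  then obtain a0 b0 where d: "a0 \<in> {1..L}" "b0 \<in> {1..L}" "l a0 \<noteq> l b0" by blast
  have "H0 \<le> log 2 (real (card {1..L}))"
    unfolding H0_def l_def by (rule entropy_le_log) (use pos s1 in auto)
  then have HI: "H0 < I" using assms(4) by simp
  obtain \<epsilon> N where \<epsilon>: "0 < \<epsilon>" and lowN: "\<And>n. n \<ge> N \<Longrightarrow> 0 < n \<and> {x\<in>seqs L n. sum_list (map l x) \<le> real n * I} \<noteq> {} \<and>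
           real n * (H0 + 2*\<epsilon>) - 1 \<le> log 2 (real (card {x\<in>seqs L n. sum_list (map l x) \<le> real n * I}))"
    using lower_card[OF pos s1 l_def H0_def d HI] by blast
  define \<tau> where "\<tau> = min (\<epsilon> / (2 * ln 2 * K2 + 1)) (1 / (ln 2 * M + 1))"
  have ln2: "0 < ln (2::real)" by simp
  have d1: "0 < 2 * ln 2 * K2 + 1" using K2_nn ln2 by (simp add: add_nonneg_pos)
  have d2: "0 < ln 2 * M + 1" using M_nn ln2 by (simp add: add_nonneg_pos)
  have \<tau>pos: "0 < \<tau>" unfolding \<tau>_def using \<epsilon> d1 d2 by simp
  have \<tau>K: "\<tau> * (ln 2 * K2) \<le> \<epsilon> / 2"
  proof -
    have "\<tau> \<le> \<epsilon> / (2 * ln 2 * K2 + 1)" unfolding \<tau>_def by simp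
    then have "\<tau> * (2 * ln 2 * K2 + 1) \<le> \<epsilon>" using d1 by (simp add: le_divide_eq)
    then show ?thesis using \<tau>pos by (simp add: algebra_simps)
  qed
  have \<tau>l: "0 \<le> \<tau> * (- log 2 (Q a)) * ln 2 \<and> \<tau> * (- log 2 (Q a)) * ln 2 \<le> 1" if a: "a \<in> {1..L}" for a
  proof
    show "0 \<le> \<tau> * (- log 2 (Q a)) * ln 2" using \<tau>pos l_nn[OF a] ln2 unfolding l_def
      by (intro mult_nonneg_nonneg) auto
    have "\<tau> \<le> 1 / (ln 2 * M + 1)" unfolding \<tau>_def by simp
    then have "\<tau> * (ln 2 * M + 1) \<le> 1" using d2 by (simp add: le_divide_eq)
    then have "\<tau> * (ln 2 * M) \<le> 1" using \<tau>pos by (simp add: algebra_simps)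
    moreover have "\<tau> * (ln 2 * l a) \<le> \<tau> * (ln 2 * M)" using lM[OF a] \<tau>pos ln2 by simp
    ultimately show "\<tau> * (- log 2 (Q a)) * ln 2 \<le> 1" unfolding l_def by (simp add: algebra_simps)
  qed
  have Zb: "log 2 (\<Sum>a\<in>{1..L}. Q a powr (1 - \<tau>)) \<le> \<tau> * H0 + \<tau>^2 * ln 2 * K2"
    unfolding H0_def K2_def l_def by (rule Z_bound[OF pos s1]) (rule ballI, erule \<tau>l)
  have "(\<Sum>a\<in>{1..L}. Q a powr 1) = (\<Sum>a\<in>{1..L}. Q a)"
  proof (rule sum.cong[OF refl])
    fix a assume "a \<in> {1..L}"
    then have "0 < Q a" by (rule Qp)
    then show "Q a powr 1 = Q a" by simp
  qed
  then have Z1: "(\<Sum>a\<in>{1..L}. Q a powr 1) = 1" using s1 by simp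
  define c1 where "c1 = \<tau> * \<epsilon> / 2"
  define c2 where "c2 = max c1 I"
  have c1: "0 < c1" unfolding c1_def using \<tau>pos \<epsilon> by simp
  define N2 where "N2 = max N (nat \<lceil>1/\<epsilon>\<rceil> + 1)"
  have main: "c1 * real n \<le> divergence (seqs L n) (uniform_on (typical_set L Q I n)) (iid_pmf Q)
            \<and> divergence (seqs L n) (uniform_on (typical_set L Q I n)) (iid_pmf Q) \<le> c2 * real n"
    if nN: "n \<ge> N2" for n
  proof -
    have "n \<ge> N" using nN unfolding N2_def by simp
    note low = lowN[OF this]
    have n0: "0 < n" using low by simp
    have ne: "1 \<le> real n * \<epsilon>"
    proof -
      have "1/\<epsilon> \<le> real n" using nN unfolding N2_def by linarith
      then show ?thesis using \<epsilon> by (simp add: divide_le_eq mult.commute)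
    qed
    define S where "S = typical_set L Q I n"
    have Seq: "S = {x\<in>seqs L n. sum_list (map l x) \<le> real n * I}"
      unfolding S_def typical_set_def
    proof (intro Collect_cong conj_cong refl)
      fix x assume "x \<in> seqs L n"
      then have "cross_entropy {1..L} (emp_pmf x) Q = sum_list (map l x) / real n"
        unfolding l_def by (rule ce_formula[OF _ n0])
      then show "(cross_entropy {1..L} (emp_pmf x) Q \<le> I) = (sum_list (map l x) \<le> real n * I)"
        using n0 by (simp add: divide_le_eq mult.commute)
    qed
    have SS: "S \<subseteq> seqs L n" "S \<noteq> {}" using low unfolding Seq by auto
    have finS: "finite S" using SS(1) finite_seqs by (rule finite_subset)
    define c where "c = real (card S)"
    have c: "0 < c" unfolding c_def using finS SS(2) by (simp add: card_gt_0_iff)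
    define avg where "avg = (\<Sum>x\<in>S. sum_list (map l x)) / c"
    have D: "divergence (seqs L n) (uniform_on S) (iid_pmf Q) = avg - log 2 c"
      unfolding avg_def c_def l_def by (rule div_formula[OF pos SS])
    have t1: "log 2 c \<le> 1 * avg + real n * log 2 (\<Sum>a\<in>{1..L}. Q a powr 1)"
      unfolding avg_def c_def l_def by (rule tilt_bound[OF pos SS L0])
    then have t1': "log 2 c \<le> avg" using Z1 by simp
    have t2: "log 2 c \<le> (1 - \<tau>) * avg + real n * log 2 (\<Sum>a\<in>{1..L}. Q a powr (1 - \<tau>))"
      unfolding avg_def c_def l_def by (rule tilt_bound[OF pos SS L0])
    have lc: "real n * (H0 + 2*\<epsilon>) - 1 \<le> log 2 c" using low unfolding c_def Seq by simp
    have avg_lb: "real n * H0 + real n * \<epsilon> \<le> avg" using lc t1' ne by (simp add: algebra_simps)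
    have f1: "\<tau> * (real n * H0 + real n * \<epsilon>) \<le> \<tau> * avg" using avg_lb \<tau>pos by simp
    have f2: "real n * log 2 (\<Sum>a\<in>{1..L}. Q a powr (1 - \<tau>)) \<le> real n * (\<tau> * H0 + \<tau>^2 * ln 2 * K2)"
      using Zb by (simp add: mult_left_mono)
    have f3: "real n * \<tau> * (\<tau> * (ln 2 * K2)) \<le> real n * \<tau> * (\<epsilon> / 2)"
    proof -
      have "0 \<le> real n * \<tau>" using \<tau>pos by simp
      then show ?thesis by (rule mult_left_mono[OF \<tau>K])
    qed
    have lower: "c1 * real n \<le> avg - log 2 c"
    proof -
      have "avg - log 2 c \<ge> \<tau> * avg - real n * log 2 (\<Sum>a\<in>{1..L}. Q a powr (1 - \<tau>))"
        using t2 by (simp add: algebra_simps)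
      moreover have "\<tau> * avg - real n * log 2 (\<Sum>a\<in>{1..L}. Q a powr (1 - \<tau>))
          \<ge> \<tau> * (real n * H0 + real n * \<epsilon>) - real n * (\<tau> * H0 + \<tau>^2 * ln 2 * K2)"
        using f1 f2 by linarith
      moreover have "\<tau> * (real n * H0 + real n * \<epsilon>) - real n * (\<tau> * H0 + \<tau>^2 * ln 2 * K2)
          = real n * \<tau> * \<epsilon> - real n * \<tau> * (\<tau> * (ln 2 * K2))"
        by (simp add: algebra_simps power2_eq_square)
      moreover have "c1 * real n = real n * \<tau> * \<epsilon> - real n * \<tau> * (\<epsilon> / 2)"
        unfolding c1_def by (simp add: algebra_simps)
      ultimately show ?thesis using f3 by linarith
    qed
    have upper: "avg - log 2 c \<le> c2 * real n"
    proof -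
      have "(\<Sum>x\<in>S. sum_list (map l x)) \<le> (\<Sum>x\<in>S. real n * I)"
        using Seq by (intro sum_mono) auto
      then have "(\<Sum>x\<in>S. sum_list (map l x)) \<le> c * (real n * I)" unfolding c_def by simp
      then have "avg \<le> real n * I" unfolding avg_def using c by (simp add: divide_le_eq mult.commute)
      moreover have "0 \<le> log 2 c"
      proof -
        have "1 \<le> c" unfolding c_def using finS SS(2) by (simp add: Suc_leI card_gt_0_iff)
        then show ?thesis by simp
      qed
      moreover have "real n * I \<le> c2 * real n"
      proof -
        have "real n * I \<le> real n * c2" unfolding c2_def by (intro mult_left_mono) auto
        then show ?thesis by (simp add: mult.commute)
      qed
      ultimately show ?thesis by linarith
    qed
    show ?thesis using lower upper D unfolding S_def by simp
  qed
  have "\<forall>\<^sub>F n in sequentially.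
              c1 * real n \<le> divergence (seqs L n) (uniform_on (typical_set L Q I n)) (iid_pmf Q)
            \<and> divergence (seqs L n) (uniform_on (typical_set L Q I n)) (iid_pmf Q) \<le> c2 * real n"
    unfolding eventually_sequentially using main by blast
  moreover have "c1 \<le> c2" unfolding c2_def by simp
  ultimately show ?thesis using c1 by blast
qed

end
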